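(* Let $n\geq 1$ and $0\leq k\leq n-1$. There is a bijection between the set of Catalan paths $P$ of order $n$ with $\mathrm{valley}(P)=k$ and the set of Catalan paths $Q$ of order $n$ with $\mathrm{enor}(Q)=k$.
   Context: A Catalan path of order $n$ is a word $P=p_1p_2\cdots p_{2n}$ in the steps $\mathbf N=(0,1)$ and $\mathbf E=(1,0)$ with $n$ of each, describing a lattice path from $(0,0)$ to $(n,n)$ that never goes below the line $y=x$. $\mathrm{valley}(P)$ is the number of indices $i$ with $p_i=\mathbf E$ and $p_{i+1}=\mathbf N$. $\mathrm{enor}(P)$ is the number of indices $i\in\{1,\dots,n\}$ with $p_{2i}=\mathbf N$. *)

theory Defs
  imports Main
begin

datatype step = N | E

text \<open>A word in N and E; position i (1-based) is P ! (i - 1).\<close>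

definition catalan_path :: "nat \<Rightarrow> step list \<Rightarrow> bool" where
  "catalan_path n P \<longleftrightarrow> length P = 2 * n \<and>
     length (filter (\<lambda>s. s = N) P) = n \<and>
     (\<forall>j \<le> length P. length (filter (\<lambda>s. s = E) (take j P))
                       \<le> length (filter (\<lambda>s. s = N) (take j P)))"

definition catalan_paths :: "nat \<Rightarrow> step list set" where
  "catalan_paths n = {P. catalan_path n P}"

definition valley :: "step list \<Rightarrow> nat" where
  "valley P = card {i. 1 \<le> i \<and> i < length P \<and> P ! (i - 1) = E \<and> P ! i = N}"

definition enor :: "step list \<Rightarrow> nat" where
  "enor P = card {i. 1 \<le> i \<and> i \<le> length P div 2 \<and> P ! (2 * i - 1) = N}"

end

theory Submission
  imports Defs
begin

datatype tree = Leaf | Node tree tree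

fun w :: "tree \<Rightarrow> step list" where
  "w Leaf = []"
| "w (Node l r) = N # w l @ E # w r"

fun chk :: "nat \<Rightarrow> step list \<Rightarrow> bool" where
  "chk h [] = (h = 0)"
| "chk h (N # xs) = chk (Suc h) xs"
| "chk h (E # xs) = (h > 0 \<and> chk (h - 1) xs)"

abbreviation cN :: "step list \<Rightarrow> nat" where "cN P \<equiv> length (filter (\<lambda>s. s = N) P)"
abbreviation cE :: "step list \<Rightarrow> nat" where "cE P \<equiv> length (filter (\<lambda>s. s = E) P)"

lemma all_le_Suc: "(\<forall>j\<le>Suc m. Q j) = (Q 0 \<and> (\<forall>j\<le>m. Q (Suc j)))"
  by (auto, case_tac j, auto)

lemma chk_iff: "chk h P \<longleftrightarrow> (\<forall>j \<le> length P. cE (take j P) \<le> h + cN (take j P)) \<and> cE P = h + cN P"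
proof (induction P arbitrary: h)
  case Nil
  then show ?case by auto
next
  case (Cons x xs)
  show ?case
  proof (cases x)
    case N
    then show ?thesis using Cons[of "Suc h"] by (simp only: length_Cons all_le_Suc) auto
  next
    case E
    show ?thesis
    proof (cases h)
      case 0
      then show ?thesis using E by (simp only: length_Cons all_le_Suc) auto
    next
      case (Suc h')
      then show ?thesis using E Cons[of h'] by (simp only: length_Cons all_le_Suc) auto
    qed
  qed
qed

lemma cat_iff: "catalan_path n P \<longleftrightarrow> length P = 2 * n \<and> chk 0 P"
proof -
  have len: "length P = cN P + cE P"
  proof (induction P)
    case (Cons x xs) then show ?case by (cases x) auto
  qed simp
  show ?thesis
  proof
    assume a: "catalan_path n P"
    then have "cE P \<le> cN P" unfolding catalan_path_def by (metis order_refl take_all)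
    with a len show "length P = 2 * n \<and> chk 0 P" unfolding catalan_path_def chk_iff by auto
  next
    assume "length P = 2 * n \<and> chk 0 P"
    with len show "catalan_path n P" unfolding catalan_path_def chk_iff by auto
  qed
qed

lemma chk_w: "chk h (w t @ r) = chk h r"
  by (induction t arbitrary: h r) auto

lemma len_w: "length (w t) = 2 * size t"
  by (induction t) auto

lemma parse: "chk h P \<Longrightarrow> \<exists>t rest. P = w t @ rest \<and>
   ((rest = [] \<and> h = 0) \<or> (\<exists>rest'. rest = E # rest' \<and> h > 0 \<and> chk (h - 1) rest'))"
proof (induction "length P" arbitrary: P h rule: less_induct)
  case less
  show ?case
  proof (cases P)
    case Nil
    then show ?thesis using less.prems by (intro exI[of _ Leaf]) auto
  next
    case (Cons x xs)
    show ?thesis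
    proof (cases x)
      case E
      then show ?thesis using less.prems Cons by (intro exI[of _ Leaf]) auto
    next
      case N
      then have c: "chk (Suc h) xs" using less.prems Cons by auto
      from less.hyps[of xs "Suc h"] c Cons obtain t1 rest1 where
        r1: "xs = w t1 @ E # rest1" "chk h rest1" by auto
      have "length rest1 < length P" using r1 Cons by auto
      from less.hyps[OF this r1(2)] obtain t2 rest2 where
        r2: "rest1 = w t2 @ rest2"
        "((rest2 = [] \<and> h = 0) \<or> (\<exists>rest'. rest2 = E # rest' \<and> h > 0 \<and> chk (h - 1) rest'))"
        by blast
      show ?thesis
        by (rule exI[of _ "Node t1 t2"], rule exI[of _ rest2]) (use r1 r2 Cons N in auto)
    qed
  qed
qed

lemma w_surj: "chk 0 P \<Longrightarrow> \<exists>t. P = w t"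
  using parse[of 0 P] by auto

lemma w_inj_gen: "w s @ r = w t @ r' \<Longrightarrow> (r = [] \<or> hd r = E) \<Longrightarrow> (r' = [] \<or> hd r' = E) \<Longrightarrow> s = t \<and> r = r'"
proof (induction s arbitrary: t r r')
  case Leaf
  then show ?case by (cases t) auto
next
  case (Node l1 r1)
  show ?case
  proof (cases t)
    case Leaf
    then show ?thesis using Node.prems by auto
  next
    case (Node l2 r2)
    then have "w l1 @ (E # w r1 @ r) = w l2 @ (E # w r2 @ r')" using Node.prems by auto
    from Node.IH(1)[OF this] have "l1 = l2" "w r1 @ r = w r2 @ r'" by auto
    with Node.IH(2)[OF this(2)] Node.prems Node show ?thesis by auto
  qed
qed

lemma w_inj: "inj w"
  by (rule injI) (use w_inj_gen[where r="[]" and r'="[]"] in auto)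

fun ev :: "step list \<Rightarrow> nat" and od :: "step list \<Rightarrow> nat" where
  "ev [] = 0"
| "ev (x # xs) = od xs"
| "od [] = 0"
| "od (x # xs) = (if x = N then 1 else 0) + ev xs"

lemma ev_od_app: "ev (A @ B) = ev A + (if even (length A) then ev B else od B) \<and>
                  od (A @ B) = od A + (if even (length A) then od B else ev B)"
  by (induction A) auto

lemma enor_ev: "enor P = ev P"
proof (induction P rule: induct_list012)
  case 1 then show ?case by (simp add: enor_def)
next
  case (2 x) then show ?case by (simp add: enor_def)
next
  case (3 x y xs)
  have "{i. 1 \<le> i \<and> i \<le> length (x # y # xs) div 2 \<and> (x # y # xs) ! (2 * i - 1) = N}
     = (if y = N then {1} else {}) \<union> Suc ` {i. 1 \<le> i \<and> i \<le> length xs div 2 \<and> xs ! (2 * i - 1) = N}"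
    (is "?L = ?R")
  proof (rule set_eqI)
    fix i
    show "i \<in> ?L \<longleftrightarrow> i \<in> ?R"
    proof (cases i)
      case 0 then show ?thesis by auto
    next
      case (Suc j)
      have d: "(Suc j \<le> length (x # y # xs) div 2) = (j \<le> length xs div 2)" by auto
      have e: "(x # y # xs) ! (2 * Suc j - 1) = (y # xs) ! (2 * j)" by simp
      show ?thesis
      proof (cases j)
        case 0 then show ?thesis using Suc d e by auto
      next
        case (Suc j')
        have "(y # xs) ! (2 * j) = xs ! (2 * Suc j' - 1)" using Suc by simp
        then show ?thesis using Suc \<open>i = Suc j\<close> d e by auto
      qed
    qed
  qed
  moreover have "card ?R = (if y = N then 1 else 0) + card {i. 1 \<le> i \<and> i \<le> length xs div 2 \<and> xs ! (2 * i - 1) = N}"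
    by (auto simp: card_image card_insert_if)
  ultimately show ?case using 3 by (simp add: enor_def)
qed

primrec vl :: "step list \<Rightarrow> nat" where
  "vl [] = 0"
| "vl (x # xs) = (if x = E \<and> xs \<noteq> [] \<and> hd xs = N then 1 else 0) + vl xs"

lemma vl_app: "vl (A @ B) = vl A + vl B + (if A \<noteq> [] \<and> B \<noteq> [] \<and> last A = E \<and> hd B = N then 1 else 0)"
  by (induction A) auto

lemma valley_vl: "valley P = vl P"
proof (induction P)
  case Nil then show ?case by (simp add: valley_def)
next
  case (Cons x xs)
  have "{i. 1 \<le> i \<and> i < length (x # xs) \<and> (x # xs) ! (i - 1) = E \<and> (x # xs) ! i = N}
    = (if x = E \<and> xs \<noteq> [] \<and> hd xs = N then {1} else {}) \<union>
      Suc ` {i. 1 \<le> i \<and> i < length xs \<and> xs ! (i - 1) = E \<and> xs ! i = N}" (is "?L = ?R")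
  proof (rule set_eqI)
    fix i
    show "i \<in> ?L \<longleftrightarrow> i \<in> ?R"
    proof (cases i)
      case 0 then show ?thesis by auto
    next
      case (Suc j)
      then show ?thesis by (cases j) (auto simp: hd_conv_nth)
    qed
  qed
  moreover have "card ?R = (if x = E \<and> xs \<noteq> [] \<and> hd xs = N then 1 else 0) +
      card {i. 1 \<le> i \<and> i < length xs \<and> xs ! (i - 1) = E \<and> xs ! i = N}"
    by (auto simp: card_image card_insert_if)
  ultimately show ?case using Cons by (simp add: valley_def)
qed

fun et :: "tree \<Rightarrow> nat" and ot :: "tree \<Rightarrow> nat" where
  "et Leaf = 0"
| "et (Node l r) = ot l + et r"
| "ot Leaf = 0"
| "ot (Node l r) = 1 + et l + ot r"

fun vt :: "tree \<Rightarrow> nat" where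
  "vt Leaf = 0"
| "vt (Node l r) = vt l + vt r + (if r \<noteq> Leaf then 1 else 0)"

lemma ev_w: "ev (w t) = et t \<and> od (w t) = ot t"
  by (induction t) (auto simp: ev_od_app len_w)

lemma w_Leaf: "(w t = []) = (t = Leaf)"
  by (cases t) auto

lemma hd_w: "t \<noteq> Leaf \<Longrightarrow> hd (w t) = N"
  by (cases t) auto

lemma vl_w: "vl (w t) = vt t"
proof (induction t)
  case Leaf then show ?case by simp
next
  case (Node l r)
  have "vl (w (Node l r)) = vl (w l @ E # w r)"
    by (cases l) auto
  also have "\<dots> = vt l + vt r + (if r \<noteq> Leaf then 1 else 0)"
    using Node by (simp add: vl_app w_Leaf hd_w)
  finally show ?case by simp
qed

fun g :: "bool \<Rightarrow> tree \<Rightarrow> tree" where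
  "g b Leaf = Leaf"
| "g True (Node l r) = Node (g False r) (g True l)"
| "g False (Node l r) = Node (g True l) (g False r)"

fun hh :: "bool \<Rightarrow> tree \<Rightarrow> tree" where
  "hh b Leaf = Leaf"
| "hh True (Node a c) = Node (hh True c) (hh False a)"
| "hh False (Node a c) = Node (hh True a) (hh False c)"

lemma g_hh: "g b (hh b t) = t"
  by (induction t arbitrary: b) (case_tac b; auto)+

lemma hh_g: "hh b (g b t) = t"
  by (induction t arbitrary: b) (case_tac b; auto)+

lemma size_g: "size (g b t) = size t"
  by (induction t arbitrary: b) (case_tac b; auto)+

lemma stat_g: "if b then et (g b t) = vt t else ot (g b t) = vt t + (if t \<noteq> Leaf then 1 else 0)"
proof (induction t arbitrary: b)
  case Leaf then show ?case by simp
next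
  case (Node l r)
  show ?case
    using Node.IH(1)[of True] Node.IH(2)[of False] by (cases b) auto
qed

lemma w_cat: "w t \<in> catalan_paths (size t)"
  using chk_w[of 0 t "[]"] by (simp add: catalan_paths_def cat_iff len_w)

theorem lemma4p2:
  fixes n k :: nat
  assumes "n \<ge> 1" and "k \<le> n - 1"
  shows "\<exists>f. bij_betw f {P \<in> catalan_paths n. valley P = k}
                        {Q \<in> catalan_paths n. enor Q = k}"
proof -
  let ?T = "{t. size t = n \<and> vt t = k}"
  have cat_w: "P \<in> catalan_paths n \<Longrightarrow> \<exists>t. P = w t \<and> size t = n" for P
  proof -
    assume "P \<in> catalan_paths n"
    then have "length P = 2 * n" "chk 0 P" by (auto simp: catalan_paths_def cat_iff)
    with w_surj obtain t where "P = w t" by blast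
    with \<open>length P = 2 * n\<close> show ?thesis by (auto simp: len_w)
  qed
  have b1: "bij_betw w ?T {P \<in> catalan_paths n. valley P = k}"
    unfolding bij_betw_def
  proof
    show "inj_on w ?T" using w_inj by (simp add: inj_on_def inj_def)
    show "w ` ?T = {P \<in> catalan_paths n. valley P = k}"
    proof
      show "w ` ?T \<subseteq> {P \<in> catalan_paths n. valley P = k}"
        using w_cat by (auto simp: valley_vl vl_w)
      show "{P \<in> catalan_paths n. valley P = k} \<subseteq> w ` ?T"
      proof
        fix P assume "P \<in> {P \<in> catalan_paths n. valley P = k}"
        then obtain t where "P = w t" "size t = n" "valley P = k" using cat_w by blast
        then show "P \<in> w ` ?T" by (auto simp: valley_vl vl_w)
      qed
    qed
  qed
  have et_g: "et (g True t) = vt t" for t using stat_g[of True t] by simp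
  have b2: "bij_betw (w \<circ> g True) ?T {Q \<in> catalan_paths n. enor Q = k}"
    unfolding bij_betw_def
  proof
    show "inj_on (w \<circ> g True) ?T"
      using w_inj by (simp add: inj_on_def inj_def) (metis hh_g)
    show "(w \<circ> g True) ` ?T = {Q \<in> catalan_paths n. enor Q = k}"
    proof
      show "(w \<circ> g True) ` ?T \<subseteq> {Q \<in> catalan_paths n. enor Q = k}"
        using w_cat by (auto simp: enor_ev ev_w et_g size_g) (metis size_g)
      show "{Q \<in> catalan_paths n. enor Q = k} \<subseteq> (w \<circ> g True) ` ?T"
      proof
        fix Q assume "Q \<in> {Q \<in> catalan_paths n. enor Q = k}"
        then obtain s where s: "Q = w s" "size s = n" "enor Q = k" using cat_w by blast
        let ?t = "hh True s"
        have "g True ?t = s" by (rule g_hh)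
        moreover have "size ?t = n" using size_g[of True ?t] s \<open>g True ?t = s\<close> by simp
        moreover have "vt ?t = k" using et_g[of ?t] s \<open>g True ?t = s\<close> by (simp add: enor_ev ev_w)
        ultimately show "Q \<in> (w \<circ> g True) ` ?T" using s by force
      qed
    qed
  qed
  have "bij_betw ((w \<circ> g True) \<circ> inv_into ?T w) {P \<in> catalan_paths n. valley P = k}
          {Q \<in> catalan_paths n. enor Q = k}"
    by (rule bij_betw_trans[OF bij_betw_inv_into[OF b1] b2])
  then show ?thesis by blast
qed

end
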